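(* Let $P$ be a simple polytope of dimension $n\leq 3$ and let $\lambda$ be a real characteristic matrix on $P$. Then there exists a characteristic matrix $\lambda'$ on $P$ whose reduction modulo $2$ equals $\lambda$.
   Context: Let $P$ be a simple $n$-polytope with facets $F_1,\ldots,F_m$. A characteristic matrix on $P$ is an integer $n\times m$ matrix $(\boldsymbol\lambda_1,\ldots,\boldsymbol\lambda_m)$ such that whenever $F_{i_1},\ldots,F_{i_n}$ meet at a vertex, $\det(\boldsymbol\lambda_{i_1},\ldots,\boldsymbol\lambda_{i_n})=\pm 1$. A real characteristic matrix on $P$ is an $n\times m$ matrix over $\mathbb{Z}/2$ satisfying the same condition with determinant $1\in\mathbb{Z}/2$. *)

theory Defs
  imports "HOL-Analysis.Analysis" "HOL-Library.Z2"
begin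

definition simple_polytope :: "(real^'n) set \<Rightarrow> bool" where
  "simple_polytope P \<longleftrightarrow> polytope P \<and> aff_dim P = int CARD('n) \<and>
     (\<forall>v. {v} face_of P \<longrightarrow> card {F. F facet_of P \<and> v \<in> F} = CARD('n))"

definition facet_enumeration :: "(real^'n) set \<Rightarrow> nat \<Rightarrow> (nat \<Rightarrow> (real^'n) set) \<Rightarrow> bool" where
  "facet_enumeration P m F \<longleftrightarrow> bij_betw F {..<m} {G. G facet_of P}"

definition char_condition ::
  "('a::comm_ring_1 \<Rightarrow> bool) \<Rightarrow> (real^'n) set \<Rightarrow> nat \<Rightarrow> (nat \<Rightarrow> (real^'n) set)
     \<Rightarrow> (nat \<Rightarrow> 'a^'n) \<Rightarrow> bool" where
  "char_condition ok P m F lam \<longleftrightarrow>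
     (\<forall>v (g::'n \<Rightarrow> nat). {v} face_of P \<longrightarrow> bij_betw g UNIV {i. i < m \<and> v \<in> F i} \<longrightarrow>
        ok (det (\<chi> r c. lam (g c) $ r)))"

definition characteristic_matrix ::
  "(real^'n) set \<Rightarrow> nat \<Rightarrow> (nat \<Rightarrow> (real^'n) set) \<Rightarrow> (nat \<Rightarrow> int^'n) \<Rightarrow> bool" where
  "characteristic_matrix P m F lam \<longleftrightarrow> char_condition (\<lambda>d. d = 1 \<or> d = -1) P m F lam"

definition real_characteristic_matrix ::
  "(real^'n) set \<Rightarrow> nat \<Rightarrow> (nat \<Rightarrow> (real^'n) set) \<Rightarrow> (nat \<Rightarrow> bit^'n) \<Rightarrow> bool" where
  "real_characteristic_matrix P m F lam \<longleftrightarrow> char_condition (\<lambda>d. d = 1) P m F lam"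

end

theory Submission imports Defs begin
lemma det3gen:
  fixes A :: "'a::comm_ring_1^'n^'n"
  assumes U: "(UNIV::'n set) = {a,b,c}" and d: "a\<noteq>b" "b\<noteq>c" "a\<noteq>c"
  shows "det A = A$a$a*A$b$b*A$c$c + A$a$b*A$b$c*A$c$a + A$a$c*A$b$a*A$c$b
     - A$a$a*A$b$c*A$c$b - A$a$b*A$b$a*A$c$c - A$a$c*A$b$b*A$c$a"
proof -
  have f123: "finite {b, c}" "a \<notin> {b, c}" using d by auto
  have f23: "finite {c}" "b \<notin> {c}" using d by auto
  show ?thesis
    unfolding det_def U
    unfolding sum_over_permutations_insert[OF f123]
    unfolding sum_over_permutations_insert[OF f23]
    unfolding permutes_sing
    using d by (simp add: sign_swap_id permutation_swap_id sign_compose sign_id swap_id_eq algebra_simps)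
qed

lemma det2gen:
  fixes A :: "'a::comm_ring_1^'n^'n"
  assumes U: "(UNIV::'n set) = {a,b}" and d: "a\<noteq>b"
  shows "det A = A$a$a*A$b$b - A$a$b*A$b$a"
proof -
  have f12: "finite {b}" "a \<notin> {b}" using d by auto
  show ?thesis
    unfolding det_def U
    unfolding sum_over_permutations_insert[OF f12]
    unfolding permutes_sing
    using d by (simp add: sign_swap_id sign_id swap_id_eq)
qed

lemma det1gen:
  fixes A :: "'a::comm_ring_1^'n^'n"
  assumes U: "(UNIV::'n set) = {a}"
  shows "det A = A$a$a"
  unfolding det_def U permutes_sing by (simp add: sign_id)

lemma arith3:
  fixes x1 x2 x3 x4 x5 x6 x7 x8 x9 :: int
  assumes "x1 \<in> {0,1}" "x2 \<in> {0,1}" "x3 \<in> {0,1}" "x4 \<in> {0,1}" "x5 \<in> {0,1}"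
     "x6 \<in> {0,1}" "x7 \<in> {0,1}" "x8 \<in> {0,1}" "x9 \<in> {0,1}"
  shows "odd (x1*x5*x9 + x2*x6*x7 + x3*x4*x8 - x1*x6*x8 - x2*x4*x9 - x3*x5*x7) \<Longrightarrow>
   x1*x5*x9 + x2*x6*x7 + x3*x4*x8 - x1*x6*x8 - x2*x4*x9 - x3*x5*x7 = 1 \<or>
   x1*x5*x9 + x2*x6*x7 + x3*x4*x8 - x1*x6*x8 - x2*x4*x9 - x3*x5*x7 = -1"
  using assms by (simp only: insert_iff empty_iff simp_thms) (elim disjE; simp)

lemma key01:
  fixes A :: "int^'n^'n"
  assumes card: "CARD('n) \<le> 3" and e: "\<And>i j. A$i$j \<in> {0,1}" and o: "odd (det A)"
  shows "det A = 1 \<or> det A = -1"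
proof -
  have "CARD('n) = 1 \<or> CARD('n) = 2 \<or> CARD('n) = 3"
    using card finite_UNIV_card_ge_0[OF finite_class.finite_UNIV] by (metis One_nat_def Suc_leI le_antisym not_less_eq_eq numeral_2_eq_2 numeral_3_eq_3)
  then show ?thesis
  proof (elim disjE)
    assume "CARD('n) = 1"
    then obtain a where U: "(UNIV::'n set) = {a}" by (metis card_1_singletonE)
    show ?thesis using o e[of a a] det1gen[OF U, of A] by auto
  next
    assume "CARD('n) = 2"
    then obtain a b where U: "(UNIV::'n set) = {a,b}" and d: "a\<noteq>b" by (metis card_2_iff)
    show ?thesis using o e[of a a] e[of a b] e[of b a] e[of b b] det2gen[OF U d, of A] by auto
  next
    assume "CARD('n) = 3"
    then obtain a b c where U: "(UNIV::'n set) = {a,b,c}" and d: "a\<noteq>b" "b\<noteq>c" "a\<noteq>c"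
      by (metis card_3_iff)
    show ?thesis using det3gen[OF U d, of A] o
      arith3[OF e[of a a] e[of a b] e[of a c] e[of b a] e[of b b] e[of b c] e[of c a] e[of c b] e[of c c]]
      by simp
  qed
qed

lemma det_of_int_map:
  fixes A :: "int^'n^'n"
  shows "det (\<chi> r c. (of_int (A$r$c) :: 'a::comm_ring_1)) = of_int (det A)"
  unfolding det_def by (simp add: of_int_sum of_int_mult of_int_prod)

lemma bof: "(of_int k :: bit) = (if odd k then 1 else 0)"
  by (metis bit.exhaust even_of_int_iff even_zero odd_one)

theorem proposition2p17:
  fixes P :: "(real^'n) set" and m :: nat and F :: "nat \<Rightarrow> (real^'n) set"
    and lam :: "nat \<Rightarrow> bit^'n"
  assumes "simple_polytope P"
    and "CARD('n) \<le> 3"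
    and "facet_enumeration P m F"
    and "real_characteristic_matrix P m F lam"
  shows "\<exists>lam' :: nat \<Rightarrow> int^'n. characteristic_matrix P m F lam' \<and>
           (\<forall>i<m. \<forall>r. of_int (lam' i $ r) = lam i $ r)"
proof -
  define L :: "nat \<Rightarrow> int^'n" where "L i = (\<chi> r. if lam i $ r = 1 then 1 else 0)" for i
  have Lof: "of_int (L i $ r) = lam i $ r" for i r
    unfolding L_def by (cases "lam i $ r") auto
  have "characteristic_matrix P m F L"
    unfolding characteristic_matrix_def char_condition_def
  proof (intro allI impI)
    fix v and g :: "'n \<Rightarrow> nat"
    assume h: "{v} face_of P" "bij_betw g UNIV {i. i < m \<and> v \<in> F i}"
    define A :: "int^'n^'n" where "A = (\<chi> r c. L (g c) $ r)"
    have "det (\<chi> r c. lam (g c) $ r) = 1"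
      using assms(4) h unfolding real_characteristic_matrix_def char_condition_def by blast
    moreover have "(\<chi> r c. lam (g c) $ r) = (\<chi> r c. (of_int (A$r$c) :: bit))"
      unfolding A_def by (simp add: Lof)
    ultimately have "(of_int (det A) :: bit) = 1" by (simp add: det_of_int_map)
    hence "odd (det A)" by (simp add: bof split: if_splits)
    moreover have "A$i$j \<in> {0,1}" for i j unfolding A_def L_def by simp
    ultimately show "det (\<chi> r c. L (g c) $ r) = 1 \<or> det (\<chi> r c. L (g c) $ r) = -1"
      using key01[OF assms(2)] unfolding A_def by blast
  qed
  thus ?thesis using Lof by blast
qed

end
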